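(* Let $n$ be a positive integer and let $\Phi,\Psi\colon[n]^n\to[n]^n$ be the maps defined in the context. Then: (1) for all $\mathbf a\in[n]^n$, $z(\mathbf a)=\operatorname{run}(\Phi(\mathbf a))$, $Z(\mathbf a)=\operatorname{Run}(\Phi(\mathbf a))$, $\operatorname{run}(\mathbf a)=z(\Psi(\mathbf a))$ and $\operatorname{Run}(\mathbf a)=Z(\Psi(\mathbf a))$; (2) $\Phi$ and $\Psi$ are bijections and $\Psi=\Phi^{-1}$; (3) $\Phi(\mathsf{PF}_n)=\mathsf{PF}_n$.
   Context: Let $[n]=\{1,\dots,n\}$ and write $\mathbf a\in[n]^n$ as $(a_1,\dots,a_n)$, also viewed as a function $j\mapsto a_j$. $\mathsf{PF}_n$ is the set of $\mathbf a\in[n]^n$ with $|\{j:a_j\le i\}|\ge i$ for every $i\in[n]$ (parking functions). Center: $Z(\mathbf a)$ is the largest subset $X=\{x_1<\dots<x_\ell\}\subseteq[n]$ with $a_{x_i}\le i$ for all $i\in[\ell]$; $z(\mathbf a)=|Z(\mathbf a)|$. Run: if $1\in\{a_1,\dots,a_n\}$, $\operatorname{run}(\mathbf a)=\max\{i\in[n]: [i]\subseteq\{a_1,\dots,a_n\}\}$; otherwise $\operatorname{run}(\mathbf a)=0$. $\operatorname{Run}(\mathbf a)=\{\max\{j: a_j=m\}: 1\le m\le \operatorname{run}(\mathbf a)\}$ (empty if $\operatorname{run}(\mathbf a)=0$). For a permutation $\mathbf w=(w_1,\dots,w_k)\in\mathfrak S_k$, define $f_{w_i}=|\{m\in[i]: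 w_m\le w_i\}|$ for $i\in[k]$ and $t_k(\mathbf w)=(f_1,\dots,f_k)$; $t_k$ is a bijection from $\mathfrak S_k$ onto $[1]\times[2]\times\dots\times[k]$. Definition of $\Phi$: if $Z(\mathbf a)=\varnothing$, $\Phi(\mathbf a)=\mathbf a$. Otherwise let $Z(\mathbf a)=\{i_1<\dots<i_k\}$, let $\mathbf b=b_1\cdots b_k=t_k^{-1}(a_{i_1}\cdots a_{i_k})\in\mathfrak S_k$, and let $\sigma_{\mathbf a}\in\mathfrak S_n$ be given by $\sigma_{\mathbf a}(1)=k+1$, $\sigma_{\mathbf a}(j)=b_{j-1}$ for $2\le j\le k+1$, $\sigma_{\mathbf a}(j)=j$ for $k+2\le j\le n$. Then $\Phi(\mathbf a)(j)=b_\ell$ if $j=i_\ell\in Z(\mathbf a)$, and $\Phi(\mathbf a)(j)=\sigma_{\mathbf a}(a_j)$ if $j\notin Z(\mathbf a)$. Definition of $\Psi$: if $\operatorname{Run}(\mathbf a)=\varnothing$, $\Psi(\mathbf a)=\mathbf a$. Otherwise let $\operatorname{Run}(\mathbf a)=\{i_1<\dots<i_k\}$, let $\mathbf c=c_1\cdots c_k=t_k(a_{i_1}\cdots a_{i_k})$, and let $\tau_{\mathbf a}\in\mathfrak S_n$ be given by $\tau_{\mathbf a}(j)=\ell+1$ if $j=a_{i_\ell}\in[k]$, $\tau_{\mathbf a}(k+1)=1$, $\tau_{\mathbf a}(j)=j$ for $k+2\le j\le n$. Then $\Psi(\mathbf a)(j)=c_\ell$ if $j=i_\ell\in\operatorname{Run}(\mathbf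 a)$, and $\Psi(\mathbf a)(j)=\tau_{\mathbf a}(a_j)$ if $j\notin\operatorname{Run}(\mathbf a)$. *)

theory Defs
  imports "HOL-Library.FuncSet"
begin

(* Sequences of length k are functions on {1..k}; entry number l of a
  finite set S of naturals (l-th smallest, 1-based) is
  sorted_list_of_set S ! (l - 1). *)

definition words :: "nat \<Rightarrow> (nat \<Rightarrow> nat) set" where
  "words n = {1..n} \<rightarrow>\<^sub>E {1..n}"

definition PF :: "nat \<Rightarrow> (nat \<Rightarrow> nat) set" where
  "PF n = {a \<in> words n. \<forall>i \<in> {1..n}. card {j \<in> {1..n}. a j \<le> i} \<ge> i}"

definition nth_elem :: "nat set \<Rightarrow> nat \<Rightarrow> nat" where
  "nth_elem S l = sorted_list_of_set S ! (l - 1)"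

definition center_ok :: "nat \<Rightarrow> (nat \<Rightarrow> nat) \<Rightarrow> nat set \<Rightarrow> bool" where
  "center_ok n a X \<longleftrightarrow> X \<subseteq> {1..n} \<and>
     (\<forall>i \<in> {1..card X}. a (nth_elem X i) \<le> i)"

definition Zc :: "nat \<Rightarrow> (nat \<Rightarrow> nat) \<Rightarrow> nat set" where
  "Zc n a = (GREATEST X. center_ok n a X)"

definition zc :: "nat \<Rightarrow> (nat \<Rightarrow> nat) \<Rightarrow> nat" where
  "zc n a = card (Zc n a)"

definition run :: "nat \<Rightarrow> (nat \<Rightarrow> nat) \<Rightarrow> nat" where
  "run n a = (if 1 \<in> a ` {1..n}
      then Max {i \<in> {1..n}. {1..i} \<subseteq> a ` {1..n}} else 0)"

definition Run :: "nat \<Rightarrow> (nat \<Rightarrow> nat) \<Rightarrow> nat set" where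
  "Run n a = (\<lambda>m. Max {j \<in> {1..n}. a j = m}) ` {1..run n a}"

definition perms :: "nat \<Rightarrow> (nat \<Rightarrow> nat) set" where
  "perms k = {w \<in> {1..k} \<rightarrow>\<^sub>E {1..k}. bij_betw w {1..k} {1..k}}"

definition tk :: "nat \<Rightarrow> (nat \<Rightarrow> nat) \<Rightarrow> (nat \<Rightarrow> nat)" where
  "tk k w = restrict (\<lambda>v. let i = (THE i. i \<in> {1..k} \<and> w i = v)
                           in card {m \<in> {1..i}. w m \<le> w i}) {1..k}"

definition tk_inv :: "nat \<Rightarrow> (nat \<Rightarrow> nat) \<Rightarrow> (nat \<Rightarrow> nat)" where
  "tk_inv k f = (THE w. w \<in> perms k \<and> tk k w = f)"

definition Phi :: "nat \<Rightarrow> (nat \<Rightarrow> nat) \<Rightarrow> (nat \<Rightarrow> nat)" where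
  "Phi n a = (if Zc n a = {} then a else
     (let Z = Zc n a; k = card Z;
          b = tk_inv k (restrict (\<lambda>l. a (nth_elem Z l)) {1..k});
          \<sigma> = (\<lambda>j. if j = 1 then k + 1 else if 2 \<le> j \<and> j \<le> k + 1 then b (j - 1) else j)
      in restrict (\<lambda>j. if j \<in> Z then b (THE l. l \<in> {1..k} \<and> nth_elem Z l = j)
                       else \<sigma> (a j)) {1..n}))"

definition Psi :: "nat \<Rightarrow> (nat \<Rightarrow> nat) \<Rightarrow> (nat \<Rightarrow> nat)" where
  "Psi n a = (if Run n a = {} then a else
     (let R = Run n a; k = card R;
          c = tk k (restrict (\<lambda>l. a (nth_elem R l)) {1..k});
          \<tau> = (\<lambda>j. if j \<in> {1..k} then (THE l. l \<in> {1..k} \<and> a (nth_elem R l) = j) + 1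
                   else if j = k + 1 then 1 else j)
      in restrict (\<lambda>j. if j \<in> R then c (THE l. l \<in> {1..k} \<and> nth_elem R l = j)
                       else \<tau> (a j)) {1..n}))"

end

theory Submission
  imports Defs "HOL-Combinatorics.Permutations"
begin

definition rk :: "nat set \<Rightarrow> nat \<Rightarrow> nat" where
  "rk X x = card {y \<in> X. y \<le> x}"

lemma strict_sorted_card_le:
  fixes xs :: "nat list"
  assumes "sorted_wrt (<) xs" "p < length xs"
  shows "card {y \<in> set xs. y \<le> xs ! p} = Suc p"
proof -
  have d: "distinct xs" using assms(1) by (simp add: strict_sorted_iff)
  have "{y \<in> set xs. y \<le> xs ! p} = (!) xs ` {0..p}"
  proof (intro set_eqI iffI)
    fix y assume "y \<in> {y \<in> set xs. y \<le> xs ! p}"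
    then obtain i where i: "i < length xs" "y = xs ! i" "xs ! i \<le> xs ! p"
      by (auto simp: in_set_conv_nth)
    have "i \<le> p"
    proof (rule ccontr)
      assume "\<not> i \<le> p"
      then have "xs ! p < xs ! i" using sorted_wrt_nth_less[OF assms(1), of p i] i by auto
      then show False using i by auto
    qed
    then show "y \<in> (!) xs ` {0..p}" using i by auto
  next
    fix y assume "y \<in> (!) xs ` {0..p}"
    then obtain i where i: "i \<le> p" "y = xs ! i" by auto
    have "xs ! i \<le> xs ! p"
      using sorted_wrt_nth_less[OF assms(1), of i p] i assms(2)
      by (cases "i = p") auto
    then show "y \<in> {y \<in> set xs. y \<le> xs ! p}" using i assms(2) by auto
  qed
  moreover have "inj_on ((!) xs) {0..p}"
    using d assms(2) by (auto simp: inj_on_def nth_eq_iff_index_eq)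
  ultimately show ?thesis by (simp add: card_image)
qed

lemma nth_elem_in:
  assumes "finite X" "l \<in> {1..card X}"
  shows "nth_elem X l \<in> X"
proof -
  have "l - 1 < length (sorted_list_of_set X)" using assms by auto
  then have "sorted_list_of_set X ! (l - 1) \<in> set (sorted_list_of_set X)" by (rule nth_mem)
  then show ?thesis using assms(1) by (simp add: nth_elem_def)
qed

lemma rk_nth_elem:
  assumes "finite X" "l \<in> {1..card X}"
  shows "rk X (nth_elem X l) = l"
proof -
  let ?xs = "sorted_list_of_set X"
  have "card {y \<in> set ?xs. y \<le> ?xs ! (l - 1)} = Suc (l - 1)"
    by (rule strict_sorted_card_le) (use assms in \<open>auto simp: strict_sorted_list_of_set\<close>)
  then show ?thesis using assms by (simp add: rk_def nth_elem_def)
qed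

lemma rk_mono: "finite X \<Longrightarrow> x \<le> y \<Longrightarrow> rk X x \<le> rk X y"
  unfolding rk_def by (rule card_mono) auto

lemma rk_range:
  assumes "finite X" "x \<in> X"
  shows "rk X x \<in> {1..card X}"
proof -
  have "{y \<in> X. y \<le> x} \<noteq> {}" using assms by auto
  moreover have "finite {y \<in> X. y \<le> x}" using assms by auto
  ultimately have "card {y \<in> X. y \<le> x} > 0" by (simp add: card_gt_0_iff)
  then have "rk X x \<ge> 1" unfolding rk_def by simp
  moreover have "rk X x \<le> card X" unfolding rk_def using assms by (intro card_mono) auto
  ultimately show ?thesis by auto
qed

lemma rk_strict:
  assumes "finite X" "x \<in> X" "y \<in> X" "x < y"
  shows "rk X x < rk X y"
proof -
  have "y \<in> {z \<in> X. z \<le> y}" "y \<notin> {z \<in> X. z \<le> x}" using assms by auto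
  then have "{z \<in> X. z \<le> x} \<subset> {z \<in> X. z \<le> y}" using assms by (auto; blast)
  then show ?thesis unfolding rk_def by (rule psubset_card_mono[rotated]) (use assms in auto)
qed

lemma rk_inj: "finite X \<Longrightarrow> inj_on (rk X) X"
proof (rule inj_onI)
  fix x y assume f: "finite X" and xy: "x \<in> X" "y \<in> X" "rk X x = rk X y"
  show "x = y"
  proof (rule ccontr)
    assume "x \<noteq> y"
    then have "x < y \<or> y < x" by auto
    then show False using rk_strict[OF f xy(1,2)] rk_strict[OF f xy(2,1)] xy(3) by auto
  qed
qed

lemma nth_elem_rk:
  assumes "finite X" "x \<in> X"
  shows "nth_elem X (rk X x) = x"
proof -
  have r: "rk X x \<in> {1..card X}" using rk_range assms by auto
  have "rk X (nth_elem X (rk X x)) = rk X x" using rk_nth_elem[OF assms(1) r] .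
  moreover have "nth_elem X (rk X x) \<in> X" using nth_elem_in[OF assms(1) r] .
  ultimately show ?thesis using rk_inj[OF assms(1)] assms(2) by (auto dest: inj_onD)
qed

lemma the_nth_elem:
  assumes "finite X" "x \<in> X"
  shows "(THE l. l \<in> {1..card X} \<and> nth_elem X l = x) = rk X x"
proof (rule the1_equality)
  show "rk X x \<in> {1..card X} \<and> nth_elem X (rk X x) = x"
    using rk_range nth_elem_rk assms by auto
  show "\<exists>!l. l \<in> {1..card X} \<and> nth_elem X l = x"
  proof (rule ex1I[of _ "rk X x"])
    show "rk X x \<in> {1..card X} \<and> nth_elem X (rk X x) = x"
      using rk_range nth_elem_rk assms by auto
    fix l assume "l \<in> {1..card X} \<and> nth_elem X l = x"
    then show "l = rk X x" using rk_nth_elem[OF assms(1), of l] by auto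
  qed
qed

lemma bij_nth_elem: "finite X \<Longrightarrow> bij_betw (nth_elem X) {1..card X} X"
proof (rule bij_betw_byWitness[where f'="rk X"])
  assume f: "finite X"
  show "\<forall>a\<in>{1..card X}. rk X (nth_elem X a) = a" using rk_nth_elem f by blast
  show "\<forall>a'\<in>X. nth_elem X (rk X a') = a'" using nth_elem_rk f by blast
  show "nth_elem X ` {1..card X} \<subseteq> X" using nth_elem_in f by blast
  show "rk X ` X \<subseteq> {1..card X}" using rk_range f by blast
qed

lemma center_ok_rk:
  "center_ok n a X \<longleftrightarrow> X \<subseteq> {1..n} \<and> (\<forall>x\<in>X. a x \<le> rk X x)"
proof (cases "X \<subseteq> {1..n}")
  case True
  then have f: "finite X" using finite_subset by blast
  have "(\<forall>i \<in> {1..card X}. a (nth_elem X i) \<le> i) \<longleftrightarrow> (\<forall>x\<in>X. a x \<le> rk X x)"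
  proof
    assume h: "\<forall>i \<in> {1..card X}. a (nth_elem X i) \<le> i"
    show "\<forall>x\<in>X. a x \<le> rk X x"
    proof
      fix x assume x: "x \<in> X"
      have r: "rk X x \<in> {1..card X}" using rk_range[OF f x] .
      have "a (nth_elem X (rk X x)) \<le> rk X x" using h r by blast
      then show "a x \<le> rk X x" using nth_elem_rk[OF f x] by simp
    qed
  next
    assume h: "\<forall>x\<in>X. a x \<le> rk X x"
    show "\<forall>i \<in> {1..card X}. a (nth_elem X i) \<le> i"
    proof
      fix i assume i: "i \<in> {1..card X}"
      have x: "nth_elem X i \<in> X" using nth_elem_in[OF f i] .
      have "a (nth_elem X i) \<le> rk X (nth_elem X i)" using h x by blast
      then show "a (nth_elem X i) \<le> i" using rk_nth_elem[OF f i] by simp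
    qed
  qed
  then show ?thesis using True unfolding center_ok_def by blast
next
  case False
  then show ?thesis unfolding center_ok_def by blast
qed

lemma rk_insert_mono:
  assumes "finite X" shows "rk X x \<le> rk (insert j X) x"
  unfolding rk_def by (rule card_mono) (use assms in auto)

lemma rk_subset_mono:
  assumes "finite Y" "X \<subseteq> Y" shows "rk X x \<le> rk Y x"
  unfolding rk_def by (rule card_mono) (use assms in auto)

lemma Zc_eq_Union: "Zc n a = \<Union>{X. center_ok n a X}"
proof -
  let ?U = "\<Union>{X. center_ok n a X}"
  have sub: "?U \<subseteq> {1..n}" unfolding center_ok_def by blast
  then have fU: "finite ?U" using finite_subset by blast
  have okU: "center_ok n a ?U"
    unfolding center_ok_rk[of n a ?U]
  proof (intro conjI ballI sub)
    fix x assume "x \<in> ?U"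
    then obtain X where X: "center_ok n a X" "x \<in> X" by blast
    then have "a x \<le> rk X x" by (auto simp: center_ok_rk)
    also have "\<dots> \<le> rk ?U x" using X fU by (intro rk_subset_mono) auto
    finally show "a x \<le> rk ?U x" .
  qed
  show ?thesis unfolding Zc_def
    by (rule Greatest_equality) (use okU in auto)
qed

lemma Zc_props:
  shows "Zc n a \<subseteq> {1..n}" "finite (Zc n a)" "\<And>x. x \<in> Zc n a \<Longrightarrow> a x \<le> rk (Zc n a) x"
    "\<And>Y. center_ok n a Y \<Longrightarrow> Y \<subseteq> Zc n a"
proof -
  let ?U = "\<Union>{X. center_ok n a X}"
  have sub: "?U \<subseteq> {1..n}" unfolding center_ok_def by blast
  then have fU: "finite ?U" using finite_subset by blast
  show "Zc n a \<subseteq> {1..n}" "finite (Zc n a)" using sub fU Zc_eq_Union by auto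
  show "\<And>Y. center_ok n a Y \<Longrightarrow> Y \<subseteq> Zc n a" unfolding Zc_eq_Union by blast
  fix x assume "x \<in> Zc n a"
  then obtain X where X: "center_ok n a X" "x \<in> X" unfolding Zc_eq_Union by blast
  then have "a x \<le> rk X x" by (auto simp: center_ok_rk)
  also have "\<dots> \<le> rk ?U x" using X fU by (intro rk_subset_mono) auto
  finally show "a x \<le> rk (Zc n a) x" unfolding Zc_eq_Union .
qed

lemma Zc_out:
  assumes "j \<in> {1..n}" "j \<notin> Zc n a"
  shows "rk (insert j (Zc n a)) j < a j"
proof (rule ccontr)
  let ?Z = "Zc n a"
  assume "\<not> rk (insert j ?Z) j < a j"
  then have h: "a j \<le> rk (insert j ?Z) j" by simp
  have "center_ok n a (insert j ?Z)"
    unfolding center_ok_rk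
  proof (intro conjI ballI)
    show "insert j ?Z \<subseteq> {1..n}" using assms Zc_props(1) by auto
    fix x assume "x \<in> insert j ?Z"
    then show "a x \<le> rk (insert j ?Z) x"
    proof
      assume "x = j" then show ?thesis using h by simp
    next
      assume "x \<in> ?Z"
      then have "a x \<le> rk ?Z x" using Zc_props(3) by blast
      also have "\<dots> \<le> rk (insert j ?Z) x" using rk_insert_mono Zc_props(2) by blast
      finally show ?thesis .
    qed
  qed
  then have "insert j ?Z \<subseteq> ?Z" using Zc_props(4) by blast
  then show False using assms by blast
qed

lemma Zc_char:
  assumes sub: "X \<subseteq> {1..n}" and ok: "\<And>x. x \<in> X \<Longrightarrow> a x \<le> rk X x"
    and out: "\<And>j. j \<in> {1..n} \<Longrightarrow> j \<notin> X \<Longrightarrow> rk (insert j X) j < a j"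
  shows "Zc n a = X"
proof -
  have fX: "finite X" using sub finite_subset by blast
  have maxl: "Y \<subseteq> X" if Y: "center_ok n a Y" for Y
  proof (rule ccontr)
    assume "\<not> Y \<subseteq> X"
    then have ne: "Y - X \<noteq> {}" by blast
    have fY: "finite Y" using Y unfolding center_ok_def using finite_subset by blast
    define y where "y = Min (Y - X)"
    have y: "y \<in> Y" "y \<notin> X" using Min_in[OF _ ne] fY unfolding y_def by auto
    have ymin: "y' \<in> X" if "y' \<in> Y" "y' < y" for y'
    proof (rule ccontr)
      assume "y' \<notin> X"
      then have "y \<le> y'" unfolding y_def using that fY by (intro Min_le) auto
      then show False using that by simp
    qed
    have yn: "y \<in> {1..n}" using Y y unfolding center_ok_def by blast
    have "a y \<le> rk Y y" using Y y by (auto simp: center_ok_rk)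
    also have "\<dots> \<le> rk (insert y X) y"
      unfolding rk_def
    proof (rule card_mono)
      show "finite {ya \<in> insert y X. ya \<le> y}" using fX by auto
      show "{ya \<in> Y. ya \<le> y} \<subseteq> {ya \<in> insert y X. ya \<le> y}"
        using ymin by (auto simp: le_less)
    qed
    also have "\<dots> < a y" using out yn y by blast
    finally show False by simp
  qed
  have okX: "center_ok n a X" unfolding center_ok_rk using sub ok by blast
  have "X \<subseteq> Zc n a" using Zc_props(4)[OF okX] .
  moreover have "Zc n a \<subseteq> X"
    by (rule maxl) (unfold center_ok_rk, use Zc_props in blast)
  ultimately show ?thesis by blast
qed

lemma run_props:
  assumes "n > 0"
  shows "{1..run n a} \<subseteq> a ` {1..n}" "run n a \<le> n"
    "run n a < n \<Longrightarrow> Suc (run n a) \<notin> a ` {1..n}"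
proof -
  let ?S = "{i \<in> {1..n}. {1..i} \<subseteq> a ` {1..n}}"
  have "{1..run n a} \<subseteq> a ` {1..n} \<and> run n a \<le> n \<and>
        (run n a < n \<longrightarrow> Suc (run n a) \<notin> a ` {1..n})"
  proof (cases "1 \<in> a ` {1..n}")
    case True
    have fin: "finite ?S" by simp
    have ne: "1 \<in> ?S" using True assms by auto
    have r: "run n a = Max ?S" using True unfolding run_def by simp
    have m: "Max ?S \<in> ?S" using Max_in[OF fin] ne by blast
    have le: "\<And>i. i \<in> ?S \<Longrightarrow> i \<le> Max ?S" using Max_ge[OF fin] by blast
    show ?thesis
    proof (intro conjI impI)
      show "{1..run n a} \<subseteq> a ` {1..n}" "run n a \<le> n" using m r by auto
      assume lt: "run n a < n"
      show "Suc (run n a) \<notin> a ` {1..n}"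
      proof
        assume s: "Suc (run n a) \<in> a ` {1..n}"
        have e: "{1..Suc (run n a)} = insert (Suc (run n a)) {1..run n a}" by auto
        have "{1..run n a} \<subseteq> a ` {1..n}" using m r by auto
        then have "{1..Suc (run n a)} \<subseteq> a ` {1..n}" unfolding e using s by blast
        then have "Suc (run n a) \<in> ?S" using lt by auto
        then have "Suc (run n a) \<le> Max ?S" by (rule le)
        then show False using r by simp
      qed
    qed
  next
    case False
    then have "run n a = 0" unfolding run_def by simp
    then show ?thesis using False by auto
  qed
  then show "{1..run n a} \<subseteq> a ` {1..n}" "run n a \<le> n"
    "run n a < n \<Longrightarrow> Suc (run n a) \<notin> a ` {1..n}" by auto
qed

lemma run_char:
  assumes "n > 0" "{1..k} \<subseteq> a ` {1..n}" "k \<le> n" "k < n \<Longrightarrow> Suc k \<notin> a ` {1..n}"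
  shows "run n a = k"
proof (cases "k = 0")
  case True
  then have "1 \<notin> a ` {1..n}" using assms by auto
  then show ?thesis using True unfolding run_def by simp
next
  case False
  let ?S = "{i \<in> {1..n}. {1..i} \<subseteq> a ` {1..n}}"
  have one: "1 \<in> a ` {1..n}" using False assms(2) by auto
  have kS: "k \<in> ?S" using False assms by auto
  have "\<forall>i \<in> ?S. i \<le> k"
  proof (rule ccontr)
    assume "\<not> (\<forall>i \<in> ?S. i \<le> k)"
    then obtain i where "i \<in> ?S" "k < i" by auto
    then have "Suc k \<in> a ` {1..n}" "k < n" by auto
    then show False using assms(4) by blast
  qed
  then have "Max ?S = k" using kS by (intro Max_eqI) auto
  then show ?thesis using one unfolding run_def by simp
qed

definition lastp :: "nat \<Rightarrow> (nat \<Rightarrow> nat) \<Rightarrow> nat \<Rightarrow> nat" where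
  "lastp n a m = Max {j \<in> {1..n}. a j = m}"

lemma Run_lastp: "Run n a = lastp n a ` {1..run n a}"
  unfolding Run_def lastp_def by simp

lemma lastp_props:
  assumes "m \<in> a ` {1..n}"
  shows "lastp n a m \<in> {1..n}" "a (lastp n a m) = m"
    "\<And>j. j \<in> {1..n} \<Longrightarrow> a j = m \<Longrightarrow> j \<le> lastp n a m"
proof -
  let ?S = "{j \<in> {1..n}. a j = m}"
  have ne: "?S \<noteq> {}" using assms by auto
  have "Max ?S \<in> ?S" using Max_in[OF _ ne] by simp
  then show "lastp n a m \<in> {1..n}" "a (lastp n a m) = m" unfolding lastp_def by auto
  show "\<And>j. j \<in> {1..n} \<Longrightarrow> a j = m \<Longrightarrow> j \<le> lastp n a m"
    unfolding lastp_def by (rule Max_ge) auto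
qed

lemma lastp_eqI:
  assumes "x \<in> {1..n}" "a x = m" "\<And>j. j \<in> {1..n} \<Longrightarrow> a j = m \<Longrightarrow> j \<le> x"
  shows "lastp n a m = x"
  unfolding lastp_def by (rule Max_eqI) (use assms in auto)

definition Fk :: "nat \<Rightarrow> (nat \<Rightarrow> nat) set" where
  "Fk k = (\<Pi>\<^sub>E v \<in> {1..k}. {1..v})"

lemma perms_bij: "w \<in> perms k \<Longrightarrow> bij_betw w {1..k} {1..k}"
  unfolding perms_def by blast

lemma perms_ext: "w \<in> perms k \<Longrightarrow> w \<in> extensional {1..k}"
  unfolding perms_def by (auto simp: PiE_def)

lemma tk_val:
  assumes w: "w \<in> perms k" and v: "v \<in> {1..k}"
  shows "tk k w v = card {u \<in> {1..v}. inv_into {1..k} w u \<le> inv_into {1..k} w v}"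
proof -
  let ?P = "inv_into {1..k} w"
  have b: "bij_betw w {1..k} {1..k}" using perms_bij[OF w] .
  have inj: "inj_on w {1..k}" using bij_betw_imp_inj_on[OF b] .
  have im: "w ` {1..k} = {1..k}" using bij_betw_imp_surj_on[OF b] .
  have Pin: "?P u \<in> {1..k}" "w (?P u) = u" if "u \<in> {1..k}" for u
  proof -
    have uim: "u \<in> w ` {1..k}" using that im by simp
    show "?P u \<in> {1..k}" by (rule inv_into_into[OF uim])
    show "w (?P u) = u" by (rule f_inv_into_f[OF uim])
  qed
  have Pw: "?P (w m) = m" if "m \<in> {1..k}" for m
    by (rule inv_into_f_f[OF inj that])
  have Pv: "?P v \<in> {1..k}" "w (?P v) = v" using Pin[OF v] by auto
  have the: "(THE i. i \<in> {1..k} \<and> w i = v) = ?P v"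
  proof (rule the1_equality)
    show "?P v \<in> {1..k} \<and> w (?P v) = v" using Pv by simp
    show "\<exists>!i. i \<in> {1..k} \<and> w i = v"
    proof (rule ex1I[of _ "?P v"])
      show "?P v \<in> {1..k} \<and> w (?P v) = v" using Pv by simp
      fix i assume "i \<in> {1..k} \<and> w i = v"
      then show "i = ?P v" using Pw by force
    qed
  qed
  have Pb: "bij_betw ?P {1..k} {1..k}" using bij_betw_inv_into[OF b] .
  have seteq: "?P ` {u \<in> {1..v}. ?P u \<le> ?P v} = {m \<in> {1..?P v}. w m \<le> v}"
  proof (intro set_eqI iffI)
    fix m assume "m \<in> ?P ` {u \<in> {1..v}. ?P u \<le> ?P v}"
    then obtain u where u: "u \<in> {1..v}" "?P u \<le> ?P v" "m = ?P u" by blast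
    have uk: "u \<in> {1..k}" using u(1) v by simp
    have "?P u \<in> {1..k}" "w (?P u) = u" using Pin[OF uk] by auto
    then show "m \<in> {m \<in> {1..?P v}. w m \<le> v}" using u by simp
  next
    fix m assume m: "m \<in> {m \<in> {1..?P v}. w m \<le> v}"
    then have mk: "m \<in> {1..k}" using Pv(1) by simp
    have wm: "w m \<in> {1..k}" using mk im by blast
    have "?P (w m) = m" using Pw[OF mk] .
    moreover have "w m \<in> {u \<in> {1..v}. ?P u \<le> ?P v}" using m wm \<open>?P (w m) = m\<close> by simp
    ultimately show "m \<in> ?P ` {u \<in> {1..v}. ?P u \<le> ?P v}" by (metis imageI)
  qed
  have sub: "{u \<in> {1..v}. ?P u \<le> ?P v} \<subseteq> {1..k}" using v by auto
  have injP: "inj_on ?P {u \<in> {1..v}. ?P u \<le> ?P v}"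
    using inj_on_subset[OF bij_betw_imp_inj_on[OF Pb] sub] .
  have "card {u \<in> {1..v}. ?P u \<le> ?P v} = card {m \<in> {1..?P v}. w m \<le> v}"
    using card_image[OF injP] seteq by simp
  moreover have "tk k w v = card {m \<in> {1..?P v}. w m \<le> w (?P v)}"
    using v the unfolding tk_def by (simp add: Let_def)
  ultimately show ?thesis using Pv(2) by simp
qed

lemma tk_in_Fk:
  assumes w: "w \<in> perms k"
  shows "tk k w \<in> Fk k"
proof -
  let ?P = "inv_into {1..k} w"
  have "tk k w v \<in> {1..v}" if v: "v \<in> {1..k}" for v
  proof -
    have "card {u \<in> {1..v}. ?P u \<le> ?P v} \<le> card {1..v}" by (rule card_mono) auto
    moreover have "card {u \<in> {1..v}. ?P u \<le> ?P v} > 0"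
      using v by (subst card_gt_0_iff) auto
    ultimately show ?thesis using tk_val[OF w v] by auto
  qed
  then show ?thesis unfolding Fk_def tk_def by auto
qed

lemma ord_det:
  fixes P Q :: "nat \<Rightarrow> nat"
  assumes iP: "inj_on P {1..k}" and iQ: "inj_on Q {1..k}"
    and G: "\<And>v. v \<in> {1..k} \<Longrightarrow> card {u \<in> {1..v}. P u \<le> P v} = card {u \<in> {1..v}. Q u \<le> Q v}"
  shows "\<forall>v \<le> k. \<forall>x\<in>{1..v}. \<forall>y\<in>{1..v}. (P x \<le> P y \<longleftrightarrow> Q x \<le> Q y)"
proof (intro allI impI)
  fix v show "v \<le> k \<Longrightarrow> \<forall>x\<in>{1..v}. \<forall>y\<in>{1..v}. (P x \<le> P y \<longleftrightarrow> Q x \<le> Q y)"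
  proof (induction v)
    case 0 then show ?case by simp
  next
    case (Suc v)
    let ?s = "Suc v"
    have IH: "\<And>x y. x \<in> {1..v} \<Longrightarrow> y \<in> {1..v} \<Longrightarrow> (P x \<le> P y \<longleftrightarrow> Q x \<le> Q y)"
      using Suc by auto
    define A where "A = {u \<in> {1..v}. P u \<le> P ?s}"
    define B where "B = {u \<in> {1..v}. Q u \<le> Q ?s}"
    have eA: "{u \<in> {1..?s}. P u \<le> P ?s} = insert ?s A" unfolding A_def by auto
    have eB: "{u \<in> {1..?s}. Q u \<le> Q ?s} = insert ?s B" unfolding B_def by auto
    have "card (insert ?s A) = card (insert ?s B)"
      using G[of ?s] Suc.prems eA eB by auto
    then have cAB: "card A = card B" unfolding A_def B_def by simp
    have fA: "finite A" "finite B" unfolding A_def B_def by auto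
    have no: False if x: "x \<in> A" "x \<notin> B" and y: "y \<in> B" "y \<notin> A" for x y
    proof -
      have xy: "x \<in> {1..v}" "y \<in> {1..v}" using x y unfolding A_def B_def by auto
      have "P x \<le> P y" using x y xy unfolding A_def B_def by auto
      then have "Q x \<le> Q y" using IH xy by blast
      then have "x \<in> B" using y xy unfolding B_def by auto
      then show False using x by blast
    qed
    have AB: "A = B"
    proof (rule ccontr)
      assume ne: "A \<noteq> B"
      have "\<not> A \<subseteq> B" using card_subset_eq[OF fA(2) _ cAB] ne by blast
      moreover have "\<not> B \<subseteq> A" using card_subset_eq[OF fA(1) _ cAB[symmetric]] ne by blast
      ultimately show False using no by blast
    qed
    have sk: "?s \<in> {1..k}" using Suc.prems by auto
    show ?case
    proof (intro ballI)
      fix x y assume x: "x \<in> {1..?s}" and y: "y \<in> {1..?s}"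
      show "P x \<le> P y \<longleftrightarrow> Q x \<le> Q y"
      proof (cases "x = ?s")
        case xs: True
        show ?thesis
        proof (cases "y = ?s")
          case True then show ?thesis using xs by simp
        next
          case False
          then have yv: "y \<in> {1..v}" using y by auto
          have "P y \<noteq> P ?s" "Q y \<noteq> Q ?s" using iP iQ yv sk False
            by (auto dest: inj_onD)
          moreover have "P y \<le> P ?s \<longleftrightarrow> Q y \<le> Q ?s" using AB yv unfolding A_def B_def by blast
          ultimately show ?thesis using xs by auto
        qed
      next
        case xns: False
        then have xv: "x \<in> {1..v}" using x by auto
        show ?thesis
        proof (cases "y = ?s")
          case True
          then show ?thesis using AB xv unfolding A_def B_def by blast
        next
          case False
          then show ?thesis using IH xv y by auto
        qed
      qed
    qed
  qed
qed

lemma bij_val_card: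
  fixes P :: "nat \<Rightarrow> nat"
  assumes "bij_betw P {1..k} {1..k}" "v \<in> {1..k}"
  shows "P v = card {u \<in> {1..k}. P u \<le> P v}"
proof -
  have inj: "inj_on P {1..k}" and im: "P ` {1..k} = {1..k}" using assms(1) unfolding bij_betw_def by auto
  have Pv: "P v \<in> {1..k}" using im assms(2) by auto
  have "P ` {u \<in> {1..k}. P u \<le> P v} = {1..P v}"
  proof (intro set_eqI iffI)
    fix m assume "m \<in> P ` {u \<in> {1..k}. P u \<le> P v}"
    then show "m \<in> {1..P v}" using im by auto
  next
    fix m assume m: "m \<in> {1..P v}"
    then have "m \<in> P ` {1..k}" using im Pv by auto
    then obtain u where "u \<in> {1..k}" "m = P u" by auto
    then show "m \<in> P ` {u \<in> {1..k}. P u \<le> P v}" using m by auto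
  qed
  then have "card {u \<in> {1..k}. P u \<le> P v} = card {1..P v}"
    using card_image[OF inj_on_subset[OF inj]] by (metis (no_types, lifting) mem_Collect_eq subsetI)
  then show ?thesis by simp
qed

lemma tk_inj: "inj_on (tk k) (perms k)"
proof (rule inj_onI)
  fix w1 w2 assume w1: "w1 \<in> perms k" and w2: "w2 \<in> perms k" and eq: "tk k w1 = tk k w2"
  let ?P = "inv_into {1..k} w1" and ?Q = "inv_into {1..k} w2"
  have b1: "bij_betw w1 {1..k} {1..k}" using perms_bij[OF w1] .
  have b2: "bij_betw w2 {1..k} {1..k}" using perms_bij[OF w2] .
  have bP: "bij_betw ?P {1..k} {1..k}" using bij_betw_inv_into[OF b1] .
  have bQ: "bij_betw ?Q {1..k} {1..k}" using bij_betw_inv_into[OF b2] .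
  have G: "card {u \<in> {1..v}. ?P u \<le> ?P v} = card {u \<in> {1..v}. ?Q u \<le> ?Q v}"
    if "v \<in> {1..k}" for v
  proof -
    have "tk k w1 v = tk k w2 v" using eq by simp
    then show ?thesis unfolding tk_val[OF w1 that] tk_val[OF w2 that] .
  qed
  have ord0: "\<forall>v \<le> k. \<forall>x\<in>{1..v}. \<forall>y\<in>{1..v}. (?P x \<le> ?P y \<longleftrightarrow> ?Q x \<le> ?Q y)"
    by (rule ord_det[OF bij_betw_imp_inj_on[OF bP] bij_betw_imp_inj_on[OF bQ] G])
  have ord: "?P x \<le> ?P y \<longleftrightarrow> ?Q x \<le> ?Q y" if "x \<in> {1..k}" "y \<in> {1..k}" for x y
    by (rule ord0[rule_format, OF order_refl that])
  have PQ: "?P v = ?Q v" if v: "v \<in> {1..k}" for v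
  proof -
    have "{u \<in> {1..k}. ?P u \<le> ?P v} = {u \<in> {1..k}. ?Q u \<le> ?Q v}"
      using ord[OF _ v] by blast
    then show ?thesis using bij_val_card[OF bP v] bij_val_card[OF bQ v] by simp
  qed
  have "w1 i = w2 i" if i: "i \<in> {1..k}" for i
  proof -
    have w2i: "w2 i \<in> {1..k}" using bij_betw_apply[OF b2 i] .
    have "?Q (w2 i) = i" using inv_into_f_f[OF bij_betw_imp_inj_on[OF b2] i] .
    then have P2: "?P (w2 i) = i" using PQ[OF w2i] by simp
    have w2im: "w2 i \<in> w1 ` {1..k}" using w2i bij_betw_imp_surj_on[OF b1] by simp
    have "w1 (?P (w2 i)) = w2 i" using f_inv_into_f[OF w2im] .
    then show ?thesis using P2 by simp
  qed
  then show "w1 = w2"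
    using extensionalityI[OF perms_ext[OF w1] perms_ext[OF w2]] by blast
qed

lemma card_perms: "card (perms k) = fact k"
proof -
  have e: "perms k = (\<lambda>p. restrict p {1..k}) ` {p. p permutes {1..k}}"
  proof (intro set_eqI iffI)
    fix w assume w: "w \<in> perms k"
    let ?p = "\<lambda>x. if x \<in> {1..k} then w x else x"
    have b: "bij_betw w {1..k} {1..k}" using perms_bij[OF w] .
    have "bij_betw ?p {1..k} {1..k}" using b by (rule bij_betw_cong[THEN iffD1, rotated]) auto
    then have pp: "?p permutes {1..k}" by (rule bij_imp_permutes) auto
    have rr: "restrict ?p {1..k} = w"
      using perms_ext[OF w] by (intro extensionalityI[of _ "{1..k}"]) auto
    show "w \<in> (\<lambda>p. restrict p {1..k}) ` {p. p permutes {1..k}}"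
    proof (rule image_eqI)
      show "w = restrict ?p {1..k}" using rr by simp
      show "?p \<in> {p. p permutes {1..k}}" using pp by simp
    qed
  next
    fix w assume "w \<in> (\<lambda>p. restrict p {1..k}) ` {p. p permutes {1..k}}"
    then obtain p where p: "p permutes {1..k}" "w = restrict p {1..k}" by auto
    have "bij_betw p {1..k} {1..k}" using permutes_imp_bij[OF p(1)] .
    then have "bij_betw w {1..k} {1..k}" unfolding p(2) by simp
    moreover have "w \<in> {1..k} \<rightarrow>\<^sub>E {1..k}" using p permutes_in_image[OF p(1)] by auto
    ultimately show "w \<in> perms k" unfolding perms_def by blast
  qed
  have inj: "inj_on (\<lambda>p. restrict p {1..k}) {p. p permutes {1..k}}"
  proof (rule inj_onI)
    fix p q assume p: "p \<in> {p. p permutes {1..k}}" and q: "q \<in> {p. p permutes {1..k}}"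
      and eq: "restrict p {1..k} = restrict q {1..k}"
    show "p = q"
    proof
      fix x show "p x = q x"
      proof (cases "x \<in> {1..k}")
        case True then show ?thesis using eq by (metis restrict_apply')
      next
        case False then show ?thesis using p q by (simp add: permutes_not_in)
      qed
    qed
  qed
  have "card (perms k) = card {p. p permutes {1..k}}" unfolding e by (rule card_image[OF inj])
  also have "\<dots> = fact k" by (rule card_permutations) auto
  finally show ?thesis .
qed

lemma card_Fk: "card (Fk k) = fact k"
  unfolding Fk_def by (simp add: card_PiE fact_prod)

lemma tk_image: "tk k ` perms k = Fk k"
proof (rule card_subset_eq)
  show "finite (Fk k)" unfolding Fk_def by (simp add: finite_PiE)
  show "tk k ` perms k \<subseteq> Fk k" using tk_in_Fk by blast
  show "card (tk k ` perms k) = card (Fk k)"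
    by (simp add: card_image[OF tk_inj] card_perms card_Fk)
qed

lemma tk_inv_props:
  assumes "f \<in> Fk k"
  shows "tk_inv k f \<in> perms k" "tk k (tk_inv k f) = f"
proof -
  obtain w0 where w0: "w0 \<in> perms k" "tk k w0 = f" using assms tk_image[of k] by (metis imageE)
  have "\<exists>!w. w \<in> perms k \<and> tk k w = f"
  proof (rule ex1I[of _ w0])
    show "w0 \<in> perms k \<and> tk k w0 = f" using w0 by simp
    fix w assume "w \<in> perms k \<and> tk k w = f"
    then show "w = w0" using w0 inj_onD[OF tk_inj[of k], of w w0] by simp
  qed
  then have "tk_inv k f \<in> perms k \<and> tk k (tk_inv k f) = f"
    unfolding tk_inv_def by (rule theI')
  then show "tk_inv k f \<in> perms k" "tk k (tk_inv k f) = f" by auto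
qed

lemma tk_inv_tk:
  assumes w: "w \<in> perms k" shows "tk_inv k (tk k w) = w"
proof -
  have f: "tk k w \<in> Fk k" using tk_in_Fk[OF w] .
  show ?thesis using inj_onD[OF tk_inj[of k] tk_inv_props(2)[OF f] tk_inv_props(1)[OF f] w] .
qed

lemma words_D: "a \<in> words n \<Longrightarrow> j \<in> {1..n} \<Longrightarrow> a j \<in> {1..n}"
  unfolding words_def by auto

lemma words_ext: "a \<in> words n \<Longrightarrow> j \<notin> {1..n} \<Longrightarrow> a j = undefined"
  unfolding words_def by auto

lemma wordsI: "(\<And>j. j \<in> {1..n} \<Longrightarrow> a j \<in> {1..n}) \<Longrightarrow> a \<in> extensional {1..n} \<Longrightarrow> a \<in> words n"
  unfolding words_def by (auto simp: PiE_iff)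

lemma words_eqI: "a \<in> words n \<Longrightarrow> b \<in> words n \<Longrightarrow> (\<And>j. j \<in> {1..n} \<Longrightarrow> a j = b j) \<Longrightarrow> a = b"
  unfolding words_def by (rule extensionalityI[of _ "{1..n}"]) (auto simp: PiE_iff)

lemma card_Run:
  assumes "n > 0" shows "card (Run n a) = run n a"
proof -
  have "inj_on (lastp n a) {1..run n a}"
  proof (rule inj_onI)
    fix x y assume "x \<in> {1..run n a}" "y \<in> {1..run n a}" "lastp n a x = lastp n a y"
    then show "x = y" using lastp_props(2) run_props(1)[OF assms, of a] by (metis subsetD)
  qed
  then show ?thesis unfolding Run_lastp by (simp add: card_image)
qed

lemma Phi_empty:
  assumes "n > 0" "a \<in> words n" "Zc n a = {}"
  shows "Phi n a = a" "run n a = 0" "Run n a = {}"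
proof -
  show "Phi n a = a" using assms unfolding Phi_def by simp
  have "1 \<notin> a ` {1..n}"
  proof
    assume "1 \<in> a ` {1..n}"
    then obtain j where j: "j \<in> {1..n}" "a j = 1" by auto
    have "rk (insert j (Zc n a)) j < a j" using Zc_out[OF j(1), of a] assms(3) by simp
    moreover have "rk (insert j (Zc n a)) j = 1"
    proof -
      have "{y \<in> {j}. y \<le> j} = {j}" by auto
      then show ?thesis unfolding rk_def assms(3) by simp
    qed
    ultimately show False using j by simp
  qed
  then show r: "run n a = 0" by (intro run_char) (use assms in auto)
  show "Run n a = {}" unfolding Run_lastp r by simp
qed

lemma Phi_main:
  assumes n: "n > 0" and aw: "a \<in> words n" and ne: "Zc n a \<noteq> {}"
  shows "Phi n a \<in> words n" "run n (Phi n a) = card (Zc n a)" "Run n (Phi n a) = Zc n a"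
    "Psi n (Phi n a) = a" "Phi n a \<in> PF n \<longleftrightarrow> a \<in> PF n"
proof -
  define Z where "Z = Zc n a"
  define k where "k = card Z"
  define f where "f = restrict (\<lambda>l. a (nth_elem Z l)) {1..k}"
  define b where "b = tk_inv k f"
  define \<sigma> where "\<sigma> = (\<lambda>j. if j = 1 then k + 1 else if 2 \<le> j \<and> j \<le> k + 1 then b (j - 1) else j)"
  have fZ: "finite Z" and Zn: "Z \<subseteq> {1..n}" unfolding Z_def using Zc_props by auto
  have Zok: "\<And>x. x \<in> Z \<Longrightarrow> a x \<le> rk Z x" unfolding Z_def using Zc_props by auto
  have k1: "k \<ge> 1" using ne fZ unfolding k_def Z_def by (simp add: Suc_leI card_gt_0_iff)
  have kn: "k \<le> n" unfolding k_def using card_mono[OF _ Zn] by simp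
  have fF: "f \<in> Fk k"
  proof -
    have "a (nth_elem Z l) \<in> {1..l}" if l: "l \<in> {1..k}" for l
    proof -
      have x: "nth_elem Z l \<in> Z" using nth_elem_in[OF fZ] l k_def by auto
      have "a (nth_elem Z l) \<le> l" using Zok[OF x] rk_nth_elem[OF fZ] l k_def by auto
      moreover have "a (nth_elem Z l) \<ge> 1" using words_D[OF aw] x Zn by fastforce
      ultimately show ?thesis by auto
    qed
    then show ?thesis unfolding f_def Fk_def by auto
  qed
  have bp: "b \<in> perms k" and tkb: "tk k b = f" using tk_inv_props[OF fF] b_def by auto
  have bb: "bij_betw b {1..k} {1..k}" using perms_bij[OF bp] .
  have bin: "\<And>l. l \<in> {1..k} \<Longrightarrow> b l \<in> {1..k}" using bij_betw_apply[OF bb] by blast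
  have binj: "l = l'" if "l \<in> {1..k}" "l' \<in> {1..k}" "b l = b l'" for l l'
    using inj_onD[OF bij_betw_imp_inj_on[OF bb] that(3,1,2)] .
  have bsurj: "\<exists>l\<in>{1..k}. b l = m" if m: "m \<in> {1..k}" for m
  proof -
    have "m \<in> b ` {1..k}" using m bij_betw_imp_surj_on[OF bb] by simp
    then show ?thesis by blast
  qed
  have rkZ: "\<And>x. x \<in> Z \<Longrightarrow> rk Z x \<in> {1..k}" using rk_range[OF fZ] k_def by auto
  have Phi_eq: "Phi n a = restrict (\<lambda>j. if j \<in> Z then b (rk Z j) else \<sigma> (a j)) {1..n}"
  proof -
    have "(\<lambda>j. if j \<in> Z then b (THE l. l \<in> {1..k} \<and> nth_elem Z l = j) else \<sigma> (a j))
        = (\<lambda>j. if j \<in> Z then b (rk Z j) else \<sigma> (a j))"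
      using the_nth_elem[OF fZ] unfolding k_def by (intro ext) auto
    moreover have "Phi n a = restrict (\<lambda>j. if j \<in> Z then b (THE l. l \<in> {1..k} \<and> nth_elem Z l = j) else \<sigma> (a j)) {1..n}"
      unfolding Phi_def Let_def Z_def k_def f_def b_def \<sigma>_def by (simp only: if_not_P[OF ne])
    ultimately show ?thesis by simp
  qed
  define a' where "a' = Phi n a"
  have a'Z: "\<And>x. x \<in> Z \<Longrightarrow> a' x = b (rk Z x)" using Phi_eq Zn unfolding a'_def by auto
  have a'N: "\<And>x. x \<in> {1..n} \<Longrightarrow> x \<notin> Z \<Longrightarrow> a' x = \<sigma> (a x)" using Phi_eq unfolding a'_def by auto
  have nonZ: "\<And>j. j \<in> {1..n} \<Longrightarrow> j \<notin> Z \<Longrightarrow> rk (insert j Z) j < a j"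
    using Zc_out unfolding Z_def by blast
  have nonZ2: "\<And>j. j \<in> {1..n} \<Longrightarrow> j \<notin> Z \<Longrightarrow> a j \<ge> 2"
  proof -
    fix j assume j: "j \<in> {1..n}" "j \<notin> Z"
    have "rk (insert j Z) j \<ge> 1" using rk_range[of "insert j Z" j] fZ by auto
    then show "a j \<ge> 2" using nonZ[OF j] by simp
  qed
  have sig_small: "\<sigma> x = b (x - 1) \<and> \<sigma> x \<in> {1..k}" if "2 \<le> x" "x \<le> k + 1" for x
  proof -
    have "x - 1 \<in> {1..k}" using that by auto
    then have "b (x - 1) \<in> {1..k}" by (rule bin)
    moreover have "\<sigma> x = b (x - 1)" unfolding \<sigma>_def using that by auto
    ultimately show ?thesis by simp
  qed
  have sig_big: "\<And>x. k + 1 < x \<Longrightarrow> \<sigma> x = x" unfolding \<sigma>_def by auto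
  have a'w: "a' \<in> words n"
  proof (rule wordsI)
    show "a' \<in> extensional {1..n}" unfolding a'_def Phi_eq by simp
    fix j assume j: "j \<in> {1..n}"
    show "a' j \<in> {1..n}"
    proof (cases "j \<in> Z")
      case True then show ?thesis using a'Z bin rkZ kn by fastforce
    next
      case False
      have aj: "a j \<in> {1..n}" "a j \<ge> 2" using words_D[OF aw j] nonZ2[OF j False] by auto
      show ?thesis
      proof (cases "a j \<le> k + 1")
        case True then show ?thesis using sig_small[of "a j"] aj a'N[OF j False] kn by auto
      next
        case False2: False then show ?thesis using sig_big[of "a j"] aj a'N[OF j False] by auto
      qed
    qed
  qed
  then show "Phi n a \<in> words n" unfolding a'_def .
  have nthZ: "\<And>l. l \<in> {1..k} \<Longrightarrow> nth_elem Z l \<in> Z \<and> rk Z (nth_elem Z l) = l"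
    using nth_elem_in[OF fZ] rk_nth_elem[OF fZ] k_def by auto
  have vals: "{1..k} \<subseteq> a' ` {1..n}"
  proof
    fix m assume m: "m \<in> {1..k}"
    then obtain l where l: "l \<in> {1..k}" "b l = m" using bsurj by blast
    then have "a' (nth_elem Z l) = m" using nthZ a'Z by auto
    then show "m \<in> a' ` {1..n}" using nthZ[OF l(1)] Zn by force
  qed
  have notk1: "k < n \<Longrightarrow> Suc k \<notin> a' ` {1..n}"
  proof
    assume "Suc k \<in> a' ` {1..n}"
    then obtain j where j: "j \<in> {1..n}" "a' j = Suc k" by auto
    show False
    proof (cases "j \<in> Z")
      case True then show False using a'Z bin rkZ j by fastforce
    next
      case False
      have aj: "a j \<ge> 2" using nonZ2[OF j(1) False] .
      show False
      proof (cases "a j \<le> k + 1")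
        case True then show False using sig_small[of "a j"] aj a'N[OF j(1) False] j by auto
      next
        case False2: False then show False using sig_big[of "a j"] a'N[OF j(1) False] j by auto
      qed
    qed
  qed
  have runa': "run n a' = k" by (rule run_char) (use n vals kn notk1 in auto)
  then show "run n (Phi n a) = card (Zc n a)" unfolding a'_def k_def Z_def .
  have lastZ: "lastp n a' m = nth_elem Z l" if l: "l \<in> {1..k}" and m: "b l = m" for l m
  proof (rule lastp_eqI)
    have x: "nth_elem Z l \<in> Z" "rk Z (nth_elem Z l) = l" using nthZ[OF l] by auto
    show "nth_elem Z l \<in> {1..n}" using x Zn by auto
    show "a' (nth_elem Z l) = m" using x a'Z m by auto
    fix j assume j: "j \<in> {1..n}" "a' j = m"
    show "j \<le> nth_elem Z l"
    proof (cases "j \<in> Z")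
      case True
      then have "b (rk Z j) = b l" using a'Z j m by auto
      then have "rk Z j = l" using binj rkZ[OF True] l by blast
      then show ?thesis using nth_elem_rk[OF fZ True] by simp
    next
      case False
      have aj: "a j \<ge> 2" using nonZ2[OF j(1) False] .
      have mk: "m \<in> {1..k}" using m bin l by auto
      have ajk: "a j \<le> k + 1"
      proof (rule ccontr)
        assume "\<not> a j \<le> k + 1"
        then have "a' j = a j" using sig_big a'N[OF j(1) False] by auto
        then show False using j mk \<open>\<not> a j \<le> k + 1\<close> by auto
      qed
      then have "b (a j - 1) = b l" using sig_small[of "a j"] aj a'N[OF j(1) False] j m by auto
      moreover have r: "a j - 1 \<in> {1..k}" using aj ajk by auto
      ultimately have "a j - 1 = l" using binj[OF r l] by simp
      then have ajl: "a j = l + 1" using aj by simp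
      show ?thesis
      proof (rule ccontr)
        assume "\<not> j \<le> nth_elem Z l"
        then have lt: "nth_elem Z l < j" by simp
        have "insert j {y \<in> Z. y \<le> nth_elem Z l} \<subseteq> {y \<in> insert j Z. y \<le> j}" using lt by auto
        then have "card (insert j {y \<in> Z. y \<le> nth_elem Z l}) \<le> rk (insert j Z) j"
          unfolding rk_def by (rule card_mono[rotated]) (use fZ in auto)
        moreover have "card (insert j {y \<in> Z. y \<le> nth_elem Z l}) = l + 1"
          using x False fZ unfolding rk_def by simp
        ultimately show False using nonZ[OF j(1) False] ajl by simp
      qed
    qed
  qed
  have Runa': "Run n a' = Z"
  proof -
    have "lastp n a' ` {1..k} = Z"
    proof (intro set_eqI iffI)
      fix z assume "z \<in> lastp n a' ` {1..k}"
      then obtain m where m: "m \<in> {1..k}" "z = lastp n a' m" by auto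
      then obtain l where "l \<in> {1..k}" "b l = m" using bsurj by blast
      then show "z \<in> Z" using lastZ nthZ m by auto
    next
      fix z assume z: "z \<in> Z"
      have "lastp n a' (b (rk Z z)) = z" using lastZ[OF rkZ[OF z] refl] nth_elem_rk[OF fZ z] by simp
      then show "z \<in> lastp n a' ` {1..k}" using bin rkZ z by force
    qed
    then show ?thesis unfolding Run_lastp runa' .
  qed
  then show "Run n (Phi n a) = Zc n a" unfolding a'_def Z_def .
  show "Psi n (Phi n a) = a"
  proof -
    have ne': "Run n a' \<noteq> {}" using Runa' ne Z_def by simp
    have w'eq: "restrict (\<lambda>l. a' (nth_elem Z l)) {1..k} = b"
    proof (rule extensionalityI[of _ "{1..k}"])
      show "restrict (\<lambda>l. a' (nth_elem Z l)) {1..k} \<in> extensional {1..k}" by simp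
      show "b \<in> extensional {1..k}" using perms_ext[OF bp] .
      fix l assume "l \<in> {1..k}" then show "restrict (\<lambda>l. a' (nth_elem Z l)) {1..k} l = b l"
        using nthZ a'Z by auto
    qed
    have theb: "(THE l. l \<in> {1..k} \<and> a' (nth_elem Z l) = m) = l'"
      if "l' \<in> {1..k}" "b l' = m" for m l'
    proof (rule the1_equality)
      show "\<exists>!l. l \<in> {1..k} \<and> a' (nth_elem Z l) = m"
      proof (rule ex1I[of _ l'])
        show "l' \<in> {1..k} \<and> a' (nth_elem Z l') = m" using that nthZ a'Z by auto
        fix l assume l: "l \<in> {1..k} \<and> a' (nth_elem Z l) = m"
        then have "b l = m" using nthZ a'Z by auto
        then show "l = l'" using binj[of l l'] l that by simp
      qed
      show "l' \<in> {1..k} \<and> a' (nth_elem Z l') = m" using that nthZ a'Z by auto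
    qed
    define \<tau> where "\<tau> = (\<lambda>j. if j \<in> {1..k} then (THE l. l \<in> {1..k} \<and> a' (nth_elem Z l) = j) + 1
                   else if j = k + 1 then 1 else j)"
    have Psi_eq: "Psi n a' = restrict (\<lambda>j. if j \<in> Z then f (rk Z j) else \<tau> (a' j)) {1..n}"
    proof -
      have "(\<lambda>j. if j \<in> Z then f (THE l. l \<in> {1..k} \<and> nth_elem Z l = j) else \<tau> (a' j))
          = (\<lambda>j. if j \<in> Z then f (rk Z j) else \<tau> (a' j))"
        using the_nth_elem[OF fZ] unfolding k_def by (intro ext) auto
      moreover have ne'': "Z \<noteq> {}" using ne Z_def by simp
      moreover have "Psi n a' = restrict (\<lambda>j. if j \<in> Z then f (THE l. l \<in> {1..k} \<and> nth_elem Z l = j) else \<tau> (a' j)) {1..n}"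
        unfolding Psi_def Let_def Runa' k_def[symmetric] w'eq tkb \<tau>_def by (simp only: if_not_P[OF ne''])
      ultimately show ?thesis by simp
    qed
    have aext: "a \<in> extensional {1..n}" using aw unfolding words_def by (simp add: PiE_iff)
    show ?thesis unfolding a'_def[symmetric]
    proof (rule extensionalityI[of _ "{1..n}"])
      show "Psi n a' \<in> extensional {1..n}" unfolding Psi_eq by simp
      show "a \<in> extensional {1..n}" using aext .
      fix j assume j: "j \<in> {1..n}"
      show "Psi n a' j = a j"
      proof (cases "j \<in> Z")
        case True
        then have "Psi n a' j = f (rk Z j)" using Psi_eq j by simp
        also have "\<dots> = a (nth_elem Z (rk Z j))" unfolding f_def using rkZ[OF True] by simp
        also have "\<dots> = a j" using nth_elem_rk[OF fZ True] by simp
        finally show ?thesis .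
      next
        case False
        have aj: "a j \<ge> 2" using nonZ2[OF j False] .
        have "Psi n a' j = \<tau> (\<sigma> (a j))" using Psi_eq j False a'N by simp
        also have "\<dots> = a j"
        proof (cases "a j \<le> k + 1")
          case True
          then have s: "\<sigma> (a j) = b (a j - 1)" "\<sigma> (a j) \<in> {1..k}" using sig_small[OF aj True] by auto
          have "a j - 1 \<in> {1..k}" using True aj by auto
          then show ?thesis unfolding \<tau>_def using s theb[OF _ s(1)[symmetric]] aj by auto
        next
          case False
          then show ?thesis unfolding \<tau>_def using sig_big by auto
        qed
        finally show ?thesis .
      qed
    qed
  qed
  show "Phi n a \<in> PF n \<longleftrightarrow> a \<in> PF n"
  proof -
    have eqc: "(card {j \<in> {1..n}. a' j \<le> i} \<ge> i) \<longleftrightarrow> (card {j \<in> {1..n}. a j \<le> i} \<ge> i)"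
      if i: "i \<in> {1..n}" for i
    proof (cases "i \<le> k")
      case True
      have A: "card {j \<in> {1..n}. a' j \<le> i} \<ge> i"
      proof -
        have mim: "m \<in> a' ` {1..n}" if "m \<in> {1..i}" for m
        proof -
          have "m \<in> {1..k}" using that True by simp
          then show ?thesis using vals by blast
        qed
        have "inj_on (lastp n a') {1..i}"
        proof (rule inj_onI)
          fix x y assume x: "x \<in> {1..i}" and y: "y \<in> {1..i}" and e: "lastp n a' x = lastp n a' y"
          have "x = a' (lastp n a' x)" using lastp_props(2)[OF mim[OF x]] by simp
          also have "\<dots> = a' (lastp n a' y)" using e by simp
          also have "\<dots> = y" using lastp_props(2)[OF mim[OF y]] .
          finally show "x = y" .
        qed
        moreover have "lastp n a' ` {1..i} \<subseteq> {j \<in> {1..n}. a' j \<le> i}"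
        proof
          fix z assume "z \<in> lastp n a' ` {1..i}"
          then obtain m where m: "m \<in> {1..i}" "z = lastp n a' m" by blast
          have "z \<in> {1..n}" "a' z = m" using lastp_props(1,2)[OF mim[OF m(1)]] m(2) by auto
          then show "z \<in> {j \<in> {1..n}. a' j \<le> i}" using m(1) by simp
        qed
        moreover have "finite {j \<in> {1..n}. a' j \<le> i}" by simp
        ultimately have "card {1..i} \<le> card {j \<in> {1..n}. a' j \<le> i}" by (rule card_inj_on_le)
        then show ?thesis by simp
      qed
      have B: "card {j \<in> {1..n}. a j \<le> i} \<ge> i"
      proof -
        have sub: "{1..i} \<subseteq> {1..card Z}" using True k_def by auto
        have "inj_on (nth_elem Z) {1..i}"
          using inj_on_subset[OF bij_betw_imp_inj_on[OF bij_nth_elem[OF fZ]] sub] .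
        moreover have "nth_elem Z ` {1..i} \<subseteq> {j \<in> {1..n}. a j \<le> i}"
        proof
          fix x assume "x \<in> nth_elem Z ` {1..i}"
          then obtain l where l: "l \<in> {1..i}" "x = nth_elem Z l" by blast
          then have lk: "l \<in> {1..k}" using True by simp
          have xZ: "x \<in> Z" "rk Z x = l" using nthZ[OF lk] l(2) by auto
          have "a x \<le> l" using Zok[OF xZ(1)] xZ(2) by simp
          then show "x \<in> {j \<in> {1..n}. a j \<le> i}" using l(1) xZ(1) Zn by auto
        qed
        moreover have "finite {j \<in> {1..n}. a j \<le> i}" by simp
        ultimately have "card {1..i} \<le> card {j \<in> {1..n}. a j \<le> i}" by (rule card_inj_on_le)
        then show ?thesis by simp
      qed
      show ?thesis using A B by simp
    next
      case False
      then have ik: "k + 1 \<le> i" by simp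
      have "{j \<in> {1..n}. a' j \<le> i} = {j \<in> {1..n}. a j \<le> i}"
      proof (intro set_eqI iffI)
        fix j assume j: "j \<in> {j \<in> {1..n}. a' j \<le> i}"
        then have jn: "j \<in> {1..n}" and ji: "a' j \<le> i" by auto
        have "a j \<le> i"
        proof (cases "j \<in> Z")
          case True
          have "a j \<le> rk Z j" using Zok[OF True] .
          moreover have "rk Z j \<le> k" using rkZ[OF True] by simp
          ultimately show ?thesis using ik by simp
        next
          case nz: False
          show ?thesis
          proof (cases "a j \<le> k + 1")
            case True then show ?thesis using ik by simp
          next
            case False2: False
            have "a' j = a j" using a'N[OF jn nz] sig_big False2 by simp
            then show ?thesis using ji by simp
          qed
        qed
        then show "j \<in> {j \<in> {1..n}. a j \<le> i}" using jn by simp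
      next
        fix j assume j: "j \<in> {j \<in> {1..n}. a j \<le> i}"
        then have jn: "j \<in> {1..n}" and ji: "a j \<le> i" by auto
        have "a' j \<le> i"
        proof (cases "j \<in> Z")
          case True
          have "a' j = b (rk Z j)" using a'Z[OF True] .
          moreover have "b (rk Z j) \<in> {1..k}" using bin[OF rkZ[OF True]] .
          ultimately show ?thesis using ik by simp
        next
          case nz: False
          have aj: "a j \<ge> 2" using nonZ2[OF jn nz] .
          show ?thesis
          proof (cases "a j \<le> k + 1")
            case True
            have "a' j = \<sigma> (a j)" using a'N[OF jn nz] .
            moreover have "\<sigma> (a j) \<in> {1..k}" using sig_small[OF aj True] by simp
            ultimately show ?thesis using ik by simp
          next
            case False2: False
            have "a' j = a j" using a'N[OF jn nz] sig_big False2 by simp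
            then show ?thesis using ji by simp
          qed
        qed
        then show "j \<in> {j \<in> {1..n}. a' j \<le> i}" using jn by simp
      qed
      then show ?thesis by simp
    qed
    show ?thesis unfolding a'_def[symmetric] PF_def using eqc a'w aw by auto
  qed
qed

lemma Psi_empty:
  assumes n: "n > 0" and aw: "a \<in> words n" and e: "Run n a = {}"
  shows "Psi n a = a" "Zc n a = {}"
proof -
  show "Psi n a = a" using e unfolding Psi_def by simp
  have r0: "run n a = 0" using card_Run[OF n, of a] e by simp
  have one: "1 \<notin> a ` {1..n}"
  proof
    assume h: "1 \<in> a ` {1..n}"
    let ?S = "{i \<in> {1..n}. {1..i} \<subseteq> a ` {1..n}}"
    have "1 \<in> ?S" using h n by auto
    then have "1 \<le> Max ?S" by (intro Max_ge) auto
    then have "run n a \<ge> 1" using h unfolding run_def by simp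
    then show False using r0 by simp
  qed
  show "Zc n a = {}"
  proof (rule Zc_char)
    fix j assume j: "j \<in> {1..n}" "j \<notin> {}"
    have "a j \<in> {1..n}" using words_D[OF aw j(1)] .
    moreover have "a j \<noteq> 1" using one j by force
    moreover have "rk (insert j {}) j = 1"
    proof -
      have "{y \<in> {j}. y \<le> j} = {j}" by auto
      then show ?thesis unfolding rk_def by simp
    qed
    ultimately show "rk (insert j {}) j < a j" by simp
  qed auto
qed

lemma Psi_main:
  assumes n: "n > 0" and aw: "a \<in> words n" and ne: "Run n a \<noteq> {}"
  shows "Psi n a \<in> words n" "Zc n (Psi n a) = Run n a" "Phi n (Psi n a) = a"
proof -
  define R where "R = Run n a"
  define k where "k = card R"
  define w where "w = restrict (\<lambda>l. a (nth_elem R l)) {1..k}"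
  define c where "c = tk k w"
  define \<tau> where "\<tau> = (\<lambda>j. if j \<in> {1..k} then (THE l. l \<in> {1..k} \<and> a (nth_elem R l) = j) + 1
                   else if j = k + 1 then 1 else j)"
  have kr: "k = run n a" unfolding k_def R_def using card_Run[OF n] by simp
  have neR: "R \<noteq> {}" using ne R_def by simp
  have vals: "{1..k} \<subseteq> a ` {1..n}" using run_props(1)[OF n, of a] kr by simp
  have kn: "k \<le> n" using run_props(2)[OF n, of a] kr by simp
  have nok1: "k < n \<Longrightarrow> Suc k \<notin> a ` {1..n}" using run_props(3)[OF n, of a] kr by simp
  have mim: "m \<in> a ` {1..n}" if "m \<in> {1..k}" for m using vals that by blast
  have lm: "lastp n a m \<in> {1..n}" "a (lastp n a m) = m"
    "\<And>j. j \<in> {1..n} \<Longrightarrow> a j = m \<Longrightarrow> j \<le> lastp n a m" if "m \<in> {1..k}" for m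
    using lastp_props[OF mim[OF that]] by auto
  have Req: "R = lastp n a ` {1..k}" unfolding R_def Run_lastp kr ..
  have Rn: "R \<subseteq> {1..n}" using Req lm by auto
  have fR: "finite R" using Rn finite_subset by blast
  have aR: "a x \<in> {1..k} \<and> lastp n a (a x) = x" if xR: "x \<in> R" for x
  proof -
    obtain m where m: "m \<in> {1..k}" "x = lastp n a m" using xR Req by blast
    then show ?thesis using lm(2)[OF m(1)] by simp
  qed
  have injR: "x = y" if "x \<in> R" "y \<in> R" "a x = a y" for x y
  proof -
    have "x = lastp n a (a x)" using aR[OF that(1)] by simp
    also have "\<dots> = lastp n a (a y)" using that(3) by simp
    also have "\<dots> = y" using aR[OF that(2)] by simp
    finally show ?thesis .
  qed
  have nthR: "nth_elem R l \<in> R \<and> rk R (nth_elem R l) = l" if "l \<in> {1..k}" for l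
    using nth_elem_in[OF fR] rk_nth_elem[OF fR] that k_def by simp
  have rkR: "rk R x \<in> {1..k} \<and> nth_elem R (rk R x) = x" if "x \<in> R" for x
    using rk_range[OF fR that] nth_elem_rk[OF fR that] k_def by simp
  have wv: "w l = a (nth_elem R l)" if "l \<in> {1..k}" for l using that w_def by simp
  have winR: "w l \<in> {1..k}" if "l \<in> {1..k}" for l
    using wv[OF that] aR nthR[OF that] by simp
  have wlast: "w (rk R (lastp n a m)) = m \<and> rk R (lastp n a m) \<in> {1..k}" if "m \<in> {1..k}" for m
  proof -
    have L: "lastp n a m \<in> R" using Req that by blast
    show ?thesis using wv[of "rk R (lastp n a m)"] rkR[OF L] lm(2)[OF that] by simp
  qed
  have winj: "l = l'" if "l \<in> {1..k}" "l' \<in> {1..k}" "w l = w l'" for l l'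
  proof -
    have e1: "a (nth_elem R l) = a (nth_elem R l')" using that(3) wv[OF that(1)] wv[OF that(2)] by simp
    have "nth_elem R l = nth_elem R l'"
      by (rule injR) (use nthR[OF that(1)] nthR[OF that(2)] e1 in auto)
    then have "rk R (nth_elem R l) = rk R (nth_elem R l')" by simp
    then show ?thesis using nthR[OF that(1)] nthR[OF that(2)] by simp
  qed
  have wp: "w \<in> perms k"
  proof -
    have "inj_on w {1..k}" using winj by (intro inj_onI) auto
    moreover have "w ` {1..k} = {1..k}"
    proof
      show "w ` {1..k} \<subseteq> {1..k}" using winR by blast
      show "{1..k} \<subseteq> w ` {1..k}"
      proof
        fix m assume m: "m \<in> {1..k}"
        show "m \<in> w ` {1..k}" using wlast[OF m] by (metis imageI)
      qed
    qed
    ultimately have "bij_betw w {1..k} {1..k}" unfolding bij_betw_def by simp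
    moreover have "w \<in> {1..k} \<rightarrow>\<^sub>E {1..k}" using winR w_def by (simp add: PiE_iff)
    ultimately show ?thesis unfolding perms_def by simp
  qed
  have cF: "c \<in> Fk k" unfolding c_def using tk_in_Fk[OF wp] .
  have cv: "c l \<in> {1..l}" if "l \<in> {1..k}" for l using cF that unfolding Fk_def by (simp add: PiE_iff)
  have theW: "(THE l. l \<in> {1..k} \<and> a (nth_elem R l) = m) = rk R (lastp n a m)" if m: "m \<in> {1..k}" for m
  proof -
    have r: "rk R (lastp n a m) \<in> {1..k}" and wr: "w (rk R (lastp n a m)) = m" using wlast[OF m] by auto
    have P: "rk R (lastp n a m) \<in> {1..k} \<and> a (nth_elem R (rk R (lastp n a m))) = m"
      using r wr wv[OF r] by simp
    show ?thesis
    proof (rule the1_equality)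
      show "rk R (lastp n a m) \<in> {1..k} \<and> a (nth_elem R (rk R (lastp n a m))) = m" using P .
      show "\<exists>!l. l \<in> {1..k} \<and> a (nth_elem R l) = m"
      proof (rule ex1I[of _ "rk R (lastp n a m)"])
        show "rk R (lastp n a m) \<in> {1..k} \<and> a (nth_elem R (rk R (lastp n a m))) = m" using P .
        fix l assume l: "l \<in> {1..k} \<and> a (nth_elem R l) = m"
        then have "w l = w (rk R (lastp n a m))" using wr wv[of l] by simp
        then show "l = rk R (lastp n a m)" using winj[of l "rk R (lastp n a m)"] l r by simp
      qed
    qed
  qed
  have tau1: "\<tau> m = rk R (lastp n a m) + 1" if "m \<in> {1..k}" for m
    unfolding \<tau>_def using that theW[OF that] by simp
  have tau2: "\<tau> x = x" if "k + 1 < x" for x unfolding \<tau>_def using that by simp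
  have Psi_eq: "Psi n a = restrict (\<lambda>j. if j \<in> R then c (rk R j) else \<tau> (a j)) {1..n}"
  proof -
    have "(\<lambda>j. if j \<in> R then c (THE l. l \<in> {1..k} \<and> nth_elem R l = j) else \<tau> (a j))
        = (\<lambda>j. if j \<in> R then c (rk R j) else \<tau> (a j))"
      using the_nth_elem[OF fR] unfolding k_def by (intro ext) auto
    moreover have "Psi n a = restrict (\<lambda>j. if j \<in> R then c (THE l. l \<in> {1..k} \<and> nth_elem R l = j) else \<tau> (a j)) {1..n}"
      unfolding Psi_def Let_def R_def k_def w_def c_def \<tau>_def by (simp only: if_not_P[OF ne])
    ultimately show ?thesis by simp
  qed
  define a'' where "a'' = Psi n a"
  have a''R: "a'' x = c (rk R x)" if "x \<in> R" for x using Psi_eq Rn that unfolding a''_def by auto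
  have a''N: "a'' x = \<tau> (a x)" if "x \<in> {1..n}" "x \<notin> R" for x using Psi_eq that unfolding a''_def by auto
  have outk: "k < n" if "j \<in> {1..n}" "j \<notin> R" for j
  proof (rule ccontr)
    assume "\<not> k < n"
    then have "card R = card {1..n}" using kn k_def by simp
    then have "R = {1..n}" using card_subset_eq[OF _ Rn] by simp
    then show False using that by simp
  qed
  have cases_out: "a j \<in> {1..k} \<or> k + 1 < a j" if "j \<in> {1..n}" "j \<notin> R" for j
  proof -
    have "a j \<in> {1..n}" using words_D[OF aw that(1)] .
    moreover have "a j \<noteq> k + 1" using nok1[OF outk[OF that]] that(1) by force
    ultimately show ?thesis by auto
  qed
  have tauin: "\<tau> (a j) \<in> {2..k+1}" if "j \<in> {1..n}" "a j \<in> {1..k}" for j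
    using tau1[OF that(2)] wlast[OF that(2)] by simp
  have a''w: "a'' \<in> words n"
  proof (rule wordsI)
    show "a'' \<in> extensional {1..n}" unfolding a''_def Psi_eq by simp
    fix j assume j: "j \<in> {1..n}"
    show "a'' j \<in> {1..n}"
    proof (cases "j \<in> R")
      case True
      have r: "rk R j \<in> {1..k}" using rkR[OF True] by simp
      have "c (rk R j) \<in> {1..rk R j}" using cv[OF r] .
      then have "a'' j \<in> {1..rk R j}" using a''R[OF True] by simp
      then show ?thesis using r kn by simp
    next
      case False
      show ?thesis
        using cases_out[OF j False]
      proof
        assume m: "a j \<in> {1..k}"
        have "a'' j \<in> {2..k+1}" using a''N[OF j False] tauin[OF j m] by simp
        then show ?thesis using outk[OF j False] by simp
      next
        assume "k + 1 < a j"
        then show ?thesis using a''N[OF j False] tau2 words_D[OF aw j] by simp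
      qed
    qed
  qed
  then show "Psi n a \<in> words n" unfolding a''_def .
  have ZR: "Zc n a'' = R"
  proof (rule Zc_char[OF Rn])
    fix x assume x: "x \<in> R"
    have "c (rk R x) \<in> {1..rk R x}" using cv rkR[OF x] by blast
    then show "a'' x \<le> rk R x" using a''R[OF x] by simp
  next
    fix j assume j: "j \<in> {1..n}" "j \<notin> R"
    show "rk (insert j R) j < a'' j"
      using cases_out[OF j]
    proof
      assume m: "a j \<in> {1..k}"
      define L where "L = lastp n a (a j)"
      have LR: "L \<in> R" using Req m L_def by blast
      have "j \<le> L" using lm(3)[OF m j(1) refl] L_def by simp
      moreover have "j \<noteq> L" using LR j(2) by blast
      ultimately have jL: "j < L" by simp
      have r1: "rk R L \<ge> 1" using rkR[OF LR] by simp
      have "{y \<in> insert j R. y \<le> j} \<subseteq> insert j ({y \<in> R. y \<le> L} - {L})"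
      proof
        fix y assume y: "y \<in> {y \<in> insert j R. y \<le> j}"
        show "y \<in> insert j ({y \<in> R. y \<le> L} - {L})"
        proof (cases "y = j")
          case True then show ?thesis by simp
        next
          case False
          then have "y \<in> R" "y \<le> j" using y by auto
          then show ?thesis using jL by simp
        qed
      qed
      then have "rk (insert j R) j \<le> card (insert j ({y \<in> R. y \<le> L} - {L}))"
        unfolding rk_def by (rule card_mono[rotated]) (use fR in simp)
      also have "\<dots> \<le> Suc (card ({y \<in> R. y \<le> L} - {L}))" using fR by (simp add: card_insert_if)
      also have "card ({y \<in> R. y \<le> L} - {L}) = rk R L - 1"
        unfolding rk_def using LR fR by (subst card_Diff_singleton) auto
      finally have "rk (insert j R) j \<le> rk R L" using r1 by simp
      moreover have "a'' j = rk R L + 1" using a''N[OF j] tau1[OF m] L_def by simp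
      ultimately show ?thesis by simp
    next
      assume big: "k + 1 < a j"
      have "rk (insert j R) j \<le> card (insert j R)" unfolding rk_def
        by (rule card_mono) (use fR in auto)
      also have "\<dots> = k + 1" using fR j(2) k_def by simp
      finally show ?thesis using a''N[OF j] tau2[OF big] big by simp
    qed
  qed
  then show "Zc n (Psi n a) = Run n a" unfolding a''_def R_def .
  show "Phi n (Psi n a) = a"
  proof -
    define \<sigma> where "\<sigma> = (\<lambda>j. if j = 1 then k + 1 else if 2 \<le> j \<and> j \<le> k + 1 then w (j - 1) else j)"
    have ceq: "restrict (\<lambda>l. a'' (nth_elem R l)) {1..k} = c"
    proof (rule extensionalityI[of _ "{1..k}"])
      show "restrict (\<lambda>l. a'' (nth_elem R l)) {1..k} \<in> extensional {1..k}" by simp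
      show "c \<in> extensional {1..k}" using cF unfolding Fk_def by (simp add: PiE_iff)
      fix l assume l: "l \<in> {1..k}"
      show "restrict (\<lambda>l. a'' (nth_elem R l)) {1..k} l = c l"
        using l nthR[OF l] a''R by simp
    qed
    have tinv: "tk_inv k c = w" unfolding c_def using tk_inv_tk[OF wp] .
    have neR'': "Zc n a'' \<noteq> {}" using ZR neR by simp
    have Phi_eq: "Phi n a'' = restrict (\<lambda>j. if j \<in> R then w (rk R j) else \<sigma> (a'' j)) {1..n}"
    proof -
      have "(\<lambda>j. if j \<in> R then w (THE l. l \<in> {1..k} \<and> nth_elem R l = j) else \<sigma> (a'' j))
          = (\<lambda>j. if j \<in> R then w (rk R j) else \<sigma> (a'' j))"
        using the_nth_elem[OF fR] unfolding k_def by (intro ext) auto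
      moreover have "Phi n a'' = restrict (\<lambda>j. if j \<in> R then w (THE l. l \<in> {1..k} \<and> nth_elem R l = j) else \<sigma> (a'' j)) {1..n}"
        unfolding Phi_def Let_def ZR k_def[symmetric] ceq tinv \<sigma>_def by (simp only: if_not_P[OF neR])
      ultimately show ?thesis by simp
    qed
    have aext: "a \<in> extensional {1..n}" using aw unfolding words_def by (simp add: PiE_iff)
    show ?thesis unfolding a''_def[symmetric]
    proof (rule extensionalityI[of _ "{1..n}"])
      show "Phi n a'' \<in> extensional {1..n}" unfolding Phi_eq by simp
      show "a \<in> extensional {1..n}" using aext .
      fix j assume j: "j \<in> {1..n}"
      show "Phi n a'' j = a j"
      proof (cases "j \<in> R")
        case True
        then have "Phi n a'' j = w (rk R j)" using Phi_eq j by simp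
        also have "\<dots> = a (nth_elem R (rk R j))" using wv rkR[OF True] by simp
        also have "\<dots> = a j" using rkR[OF True] by simp
        finally show ?thesis .
      next
        case False
        have "Phi n a'' j = \<sigma> (\<tau> (a j))" using Phi_eq j False a''N by simp
        also have "\<dots> = a j"
          using cases_out[OF j False]
        proof
          assume m: "a j \<in> {1..k}"
          have t: "\<tau> (a j) = rk R (lastp n a (a j)) + 1" using tau1[OF m] .
          have r: "rk R (lastp n a (a j)) \<in> {1..k}" using wlast[OF m] by simp
          have "\<sigma> (\<tau> (a j)) = w (rk R (lastp n a (a j)))" unfolding \<sigma>_def t using r by simp
          then show ?thesis using wlast[OF m] by simp
        next
          assume big: "k + 1 < a j"
          then show ?thesis unfolding \<sigma>_def using tau2[OF big] by simp
        qed
        finally show ?thesis .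
      qed
    qed
  qed
qed

lemma Phi_facts_conj:
  assumes n: "n > 0" and aw: "a \<in> words n"
  shows "Phi n a \<in> words n \<and> zc n a = run n (Phi n a) \<and> Zc n a = Run n (Phi n a) \<and>
    Psi n (Phi n a) = a \<and> (Phi n a \<in> PF n \<longleftrightarrow> a \<in> PF n)"
proof (cases "Zc n a = {}")
  case True
  note e = Phi_empty[OF n aw True]
  have 1: "Phi n a \<in> words n" using e aw by simp
  have 2: "Phi n a \<in> PF n \<longleftrightarrow> a \<in> PF n" using e aw by simp
  have 3: "zc n a = run n (Phi n a)" using e True unfolding zc_def by simp
  have 4: "Zc n a = Run n (Phi n a)" using e True by simp
  have 5: "Psi n (Phi n a) = a" using e Psi_empty[OF n aw] by simp
  show ?thesis by (intro conjI) (fact 1, fact 3, fact 4, fact 5, fact 2)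
next
  case False
  note m = Phi_main[OF n aw False]
  have 3: "zc n a = run n (Phi n a)" using m unfolding zc_def by simp
  show ?thesis by (intro conjI) (fact m(1), fact 3, fact m(3)[symmetric], fact m(4), fact m(5))
qed

lemma Phi_facts:
  assumes n: "n > 0" and aw: "a \<in> words n"
  shows "Phi n a \<in> words n" "zc n a = run n (Phi n a)" "Zc n a = Run n (Phi n a)"
    "Psi n (Phi n a) = a" "Phi n a \<in> PF n \<longleftrightarrow> a \<in> PF n"
  using Phi_facts_conj[OF n aw] by simp_all

lemma Psi_facts_conj:
  assumes n: "n > 0" and aw: "a \<in> words n"
  shows "Psi n a \<in> words n \<and> run n a = zc n (Psi n a) \<and> Run n a = Zc n (Psi n a) \<and>
    Phi n (Psi n a) = a"
proof (cases "Run n a = {}")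
  case True
  note e = Psi_empty[OF n aw True]
  have 1: "Psi n a \<in> words n" using e aw by simp
  have 2: "run n a = zc n (Psi n a)" using e True card_Run[OF n, of a] unfolding zc_def by simp
  have 3: "Run n a = Zc n (Psi n a)" using e True by simp
  have 4: "Phi n (Psi n a) = a" using e Phi_empty[OF n aw] by simp
  show ?thesis by (intro conjI) (fact 1, fact 2, fact 3, fact 4)
next
  case False
  note m = Psi_main[OF n aw False]
  have 2: "run n a = zc n (Psi n a)" using m card_Run[OF n, of a] unfolding zc_def by simp
  show ?thesis by (intro conjI) (fact m(1), fact 2, fact m(2)[symmetric], fact m(3))
qed

lemma Psi_facts:
  assumes n: "n > 0" and aw: "a \<in> words n"
  shows "Psi n a \<in> words n" "run n a = zc n (Psi n a)" "Run n a = Zc n (Psi n a)"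
    "Phi n (Psi n a) = a"
  using Psi_facts_conj[OF n aw] by simp_all

theorem theorem3p4:
  fixes n :: nat
  assumes "n > 0"
  shows "(\<forall>a \<in> words n.
            zc n a = run n (Phi n a) \<and> Zc n a = Run n (Phi n a) \<and>
            run n a = zc n (Psi n a) \<and> Run n a = Zc n (Psi n a))
       \<and> bij_betw (Phi n) (words n) (words n)
       \<and> bij_betw (Psi n) (words n) (words n)
       \<and> (\<forall>a \<in> words n. Psi n a = inv_into (words n) (Phi n) a)
       \<and> Phi n ` PF n = PF n"
proof -
  note P = Phi_facts[OF assms] and Q = Psi_facts[OF assms]
  have part1: "\<forall>a \<in> words n.
            zc n a = run n (Phi n a) \<and> Zc n a = Run n (Phi n a) \<and>
            run n a = zc n (Psi n a) \<and> Run n a = Zc n (Psi n a)"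
  proof
    fix a assume a: "a \<in> words n"
    show "zc n a = run n (Phi n a) \<and> Zc n a = Run n (Phi n a) \<and>
            run n a = zc n (Psi n a) \<and> Run n a = Zc n (Psi n a)"
      by (intro conjI) (fact P(2)[OF a], fact P(3)[OF a], fact Q(2)[OF a], fact Q(3)[OF a])
  qed
  have bPhi: "bij_betw (Phi n) (words n) (words n)"
  proof (rule bij_betw_byWitness[where f'="Psi n"])
    show "\<forall>a\<in>words n. Psi n (Phi n a) = a" using P(4) by simp
    show "\<forall>a\<in>words n. Phi n (Psi n a) = a" using Q(4) by simp
    show "Phi n ` words n \<subseteq> words n" using P(1) by (simp add: image_subset_iff)
    show "Psi n ` words n \<subseteq> words n" using Q(1) by (simp add: image_subset_iff)
  qed
  have bPsi: "bij_betw (Psi n) (words n) (words n)"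
  proof (rule bij_betw_byWitness[where f'="Phi n"])
    show "\<forall>a\<in>words n. Phi n (Psi n a) = a" using Q(4) by simp
    show "\<forall>a\<in>words n. Psi n (Phi n a) = a" using P(4) by simp
    show "Psi n ` words n \<subseteq> words n" using Q(1) by (simp add: image_subset_iff)
    show "Phi n ` words n \<subseteq> words n" using P(1) by (simp add: image_subset_iff)
  qed
  have inv: "\<forall>a \<in> words n. Psi n a = inv_into (words n) (Phi n) a"
  proof
    fix a assume a: "a \<in> words n"
    have "inv_into (words n) (Phi n) a = Psi n a"
      by (rule inv_into_f_eq[of "Phi n" "words n" "Psi n a" a, OF bij_betw_imp_inj_on[OF bPhi] Q(1)[OF a] Q(4)[OF a]])
    then show "Psi n a = inv_into (words n) (Phi n) a" by simp
  qed
  have PFw: "PF n \<subseteq> words n" unfolding PF_def by blast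
  have pf: "Phi n ` PF n = PF n"
  proof
    show "Phi n ` PF n \<subseteq> PF n"
    proof
      fix b assume "b \<in> Phi n ` PF n"
      then obtain a where a: "a \<in> PF n" "b = Phi n a" by blast
      have aw: "a \<in> words n" using a(1) PFw by blast
      show "b \<in> PF n" using P(5)[OF aw] a by simp
    qed
    show "PF n \<subseteq> Phi n ` PF n"
    proof
      fix b assume b: "b \<in> PF n"
      have bw: "b \<in> words n" using b PFw by blast
      have e: "Phi n (Psi n b) = b" using Q(4)[OF bw] .
      have "Psi n b \<in> PF n" using P(5)[OF Q(1)[OF bw]] e b by simp
      then show "b \<in> Phi n ` PF n" by (rule rev_image_eqI) (use e in simp)
    qed
  qed
  show ?thesis by (intro conjI) (fact part1, fact bPhi, fact bPsi, fact inv, fact pf)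
qed

end
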